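(* PINT-pos can produce false positives in both tasks: (i) there exist two isomorphic temporal graphs that PINT-pos distinguishes (classifies as non-isomorphic); (ii) there exist a temporal graph and two inherently indistinguishable temporal link prediction problems in it that PINT-pos distinguishes.
   Context: A temporal graph $G(t)$ has a finite node set and a finite chronological list of timed edge-addition events $e_{uv,t'}$ ($t'\le t$), with node and event attributes from a finite set. Two temporal graphs are isomorphic if there is a bijection of their nodes preserving node attributes at all times and mapping events to events with the same times and attributes. A model $f$ assigns embeddings $f(G)_u(t')$; it distinguishes $G_1(t),G_2(t)$ unless some node bijection $\pi$ gives $f(G_1)_u(t')=f(G_2)_{\pi(u)}(t')$ for all $u$ and $t'\le t$; it distinguishes node pairs $(u_1,v_1),(u_2,v_2)$ of $G(t)$ unless $f(G)_{u_1}(t')=f(G)_{u_2}(t')$ and $f(G)_{v_1}(t')=f(G)_{v_2}(t')$ for all $t'\le t$. Two link prediction problems $(u_1,v_1),(u_2,v_2)$ on $G(t)$ are inherently indistinguishable if adding the event $e_{u_1v_1,t}$ to $G$ and adding the event $e_{u_2v_2,t}$ to $G$ yield isomorphic temporal graphs. PINT: base RNN embeddings $h^0_u$ updated injectively at each event from $(h^0_u,h^0_v,\Phi(e_{uv,t}))$, followed by injective neighbor aggregation layers $h^k_u(t)=\mathrm{COMBINE}^k(h^{k-1}_u(t),\mathrm{AGG}^k(\{\!\{(h^{k-1}_v(t),\Phi(e_{uv,t'}))\}\!\}))$, where $\Phi$ injectively encodes event attribute and time. PINT-pos is PINT augmented with positional features: given a fixed labeling of the nodes by $1,\dots,n$,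 each node $u$ receives a feature vector indexed by the node labels whose entries count (temporal) walks from $u$ to each labeled node (e.g. for walks of length one, the row of the current adjacency matrix indexed by $u$), and these features are incorporated injectively into the node embeddings. *)

theory Defs
  imports Complex_Main "HOL-Library.Multiset"
begin

text \<open>Nodes are 0,...,nn-1 (these numbers are also the fixed labeling used by the
positional features). An event (u, v, s, a) is the
edge-addition event e_{uv,s} with attribute a.\<close>

type_synonym 'e event = "nat \<times> nat \<times> real \<times> 'e"

record ('x, 'e) tgraph =
  nn    :: nat
  nattr :: "nat \<Rightarrow> real \<Rightarrow> 'x"
  evs   :: "'e event list"

definition ev_src :: "'e event \<Rightarrow> nat" where "ev_src e = fst e"
definition ev_dst :: "'e event \<Rightarrow> nat" where "ev_dst e = fst (snd e)"
definition ev_time :: "'e event \<Rightarrow> real" where "ev_time e = fst (snd (snd e))"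
definition ev_attr :: "'e event \<Rightarrow> 'e" where "ev_attr e = snd (snd (snd e))"

definition wf_tg :: "('x, 'e) tgraph \<Rightarrow> real \<Rightarrow> bool" where
  "wf_tg G t \<longleftrightarrow> sorted (map ev_time (evs G))
     \<and> (\<forall>e \<in> set (evs G). ev_src e < nn G \<and> ev_dst e < nn G \<and> ev_time e \<le> t)"

definition map_event :: "(nat \<Rightarrow> nat) \<Rightarrow> 'e event \<Rightarrow> 'e event" where
  "map_event \<pi> e = (\<pi> (ev_src e), \<pi> (ev_dst e), ev_time e, ev_attr e)"

definition tg_iso :: "('x, 'e) tgraph \<Rightarrow> ('x, 'e) tgraph \<Rightarrow> bool" where
  "tg_iso G1 G2 \<longleftrightarrow> (\<exists>\<pi>. bij_betw \<pi> {..<nn G1} {..<nn G2}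
      \<and> (\<forall>u < nn G1. \<forall>\<tau>. nattr G1 u \<tau> = nattr G2 (\<pi> u) \<tau>)
      \<and> mset (map (map_event \<pi>) (evs G1)) = mset (evs G2))"

definition add_event :: "('x, 'e) tgraph \<Rightarrow> nat \<Rightarrow> nat \<Rightarrow> real \<Rightarrow> 'e \<Rightarrow> ('x, 'e) tgraph" where
  "add_event G u v t a = G\<lparr>evs := evs G @ [(u, v, t, a)]\<rparr>"

definition inherently_indist ::
  "('x, 'e) tgraph \<Rightarrow> real \<Rightarrow> 'e \<Rightarrow> nat \<times> nat \<Rightarrow> nat \<times> nat \<Rightarrow> bool" where
  "inherently_indist G t a p1 p2 \<longleftrightarrow>
     tg_iso (add_event G (fst p1) (snd p1) t a) (add_event G (fst p2) (snd p2) t a)"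

type_synonym ('x, 'e, 'o) model = "('x, 'e) tgraph \<Rightarrow> nat \<Rightarrow> real \<Rightarrow> 'o"

definition distinguishes_graphs ::
  "('x, 'e, 'o) model \<Rightarrow> ('x, 'e) tgraph \<Rightarrow> ('x, 'e) tgraph \<Rightarrow> real \<Rightarrow> bool" where
  "distinguishes_graphs f G1 G2 t \<longleftrightarrow>
     \<not> (\<exists>\<pi>. bij_betw \<pi> {..<nn G1} {..<nn G2}
          \<and> (\<forall>u < nn G1. \<forall>t' \<le> t. f G1 u t' = f G2 (\<pi> u) t'))"

definition distinguishes_pairs ::
  "('x, 'e, 'o) model \<Rightarrow> ('x, 'e) tgraph \<Rightarrow> real \<Rightarrow> nat \<times> nat \<Rightarrow> nat \<times> nat \<Rightarrow> bool" where
  "distinguishes_pairs f G t p1 p2 \<longleftrightarrow>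
     \<not> (\<forall>t' \<le> t. f G (fst p1) t' = f G (fst p2) t' \<and> f G (snd p1) t' = f G (snd p2) t')"

definition evs_upto :: "('x, 'e) tgraph \<Rightarrow> real \<Rightarrow> 'e event list" where
  "evs_upto G t' = filter (\<lambda>e. ev_time e \<le> t') (evs G)"

text \<open>Base (memory/RNN) embeddings: every node starts at state init; at each event
e_{uv,s} both endpoints are updated by upd from (own state, other state, Phi(attr,time)).\<close>
definition mem_step :: "('h \<Rightarrow> 'h \<Rightarrow> 'p \<Rightarrow> 'h) \<Rightarrow> ('e \<Rightarrow> real \<Rightarrow> 'p)
     \<Rightarrow> (nat \<Rightarrow> 'h) \<Rightarrow> 'e event \<Rightarrow> (nat \<Rightarrow> 'h)" where
  "mem_step upd \<Phi> m e =
     (let u = ev_src e; v = ev_dst e; p = \<Phi> (ev_attr e) (ev_time e)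
      in m(u := upd (m u) (m v) p, v := upd (m v) (m u) p))"

definition memory :: "'h \<Rightarrow> ('h \<Rightarrow> 'h \<Rightarrow> 'p \<Rightarrow> 'h) \<Rightarrow> ('e \<Rightarrow> real \<Rightarrow> 'p)
     \<Rightarrow> ('x, 'e) tgraph \<Rightarrow> real \<Rightarrow> nat \<Rightarrow> 'h" where
  "memory init upd \<Phi> G t' = foldl (mem_step upd \<Phi>) (\<lambda>_. init) (evs_upto G t')"

definition nbr_events :: "('x, 'e) tgraph \<Rightarrow> real \<Rightarrow> nat \<Rightarrow> (nat \<times> 'e event) multiset" where
  "nbr_events G t' u =
     mset ([(ev_dst e, e). e \<leftarrow> evs_upto G t', ev_src e = u]
         @ [(ev_src e, e). e \<leftarrow> evs_upto G t', ev_dst e = u])"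

text \<open>Layer embeddings h^k_u(t'). Layer 0 injectively combines the memory state with the
node attribute; layer k+1 uses COMBINE/AGG (merged into one function comb k).\<close>
fun pint_layer :: "'h \<Rightarrow> ('h \<Rightarrow> 'h \<Rightarrow> 'p \<Rightarrow> 'h) \<Rightarrow> ('e \<Rightarrow> real \<Rightarrow> 'p)
     \<Rightarrow> ('h \<Rightarrow> 'x \<Rightarrow> 'h) \<Rightarrow> (nat \<Rightarrow> 'h \<Rightarrow> ('h \<times> 'p) multiset \<Rightarrow> 'h)
     \<Rightarrow> nat \<Rightarrow> ('x, 'e) tgraph \<Rightarrow> nat \<Rightarrow> real \<Rightarrow> 'h" where
  "pint_layer init upd \<Phi> in0 comb 0 G u t' =
     in0 (memory init upd \<Phi> G t' u) (nattr G u t')"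
| "pint_layer init upd \<Phi> in0 comb (Suc k) G u t' =
     comb k (pint_layer init upd \<Phi> in0 comb k G u t')
       (image_mset (\<lambda>(v, e). (pint_layer init upd \<Phi> in0 comb k G v t', \<Phi> (ev_attr e) (ev_time e)))
          (nbr_events G t' u))"

definition ev_connects :: "'e event \<Rightarrow> nat \<Rightarrow> nat \<Rightarrow> bool" where
  "ev_connects e a b \<longleftrightarrow> (ev_src e = a \<and> ev_dst e = b) \<or> (ev_src e = b \<and> ev_dst e = a)"

text \<open>Temporal walks of length L from u to j using events of time \<le> t':
a list of event indices es (times nondecreasing) and the visited node list ws.\<close>
definition temporal_walks :: "('x, 'e) tgraph \<Rightarrow> real \<Rightarrow> nat \<Rightarrow> nat \<Rightarrow> nat
     \<Rightarrow> (nat list \<times> nat list) set" where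
  "temporal_walks G t' L u j = {(es, ws).
      length es = L \<and> length ws = Suc L \<and> ws ! 0 = u \<and> ws ! L = j
      \<and> (\<forall>k < L. es ! k < length (evs G) \<and> ev_time (evs G ! (es ! k)) \<le> t'
                  \<and> ev_connects (evs G ! (es ! k)) (ws ! k) (ws ! Suc k))
      \<and> sorted (map (\<lambda>i. ev_time (evs G ! i)) es)}"

definition pos_feat :: "nat \<Rightarrow> ('x, 'e) tgraph \<Rightarrow> nat \<Rightarrow> real \<Rightarrow> (nat \<Rightarrow> nat)" where
  "pos_feat L G u t' = (\<lambda>j. if j < nn G then card (temporal_walks G t' L u j) else 0)"

definition pint_pos :: "nat \<Rightarrow> nat \<Rightarrow> 'h \<Rightarrow> ('h \<Rightarrow> 'h \<Rightarrow> 'p \<Rightarrow> 'h) \<Rightarrow> ('e \<Rightarrow> real \<Rightarrow> 'p)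
     \<Rightarrow> ('h \<Rightarrow> 'x \<Rightarrow> 'h) \<Rightarrow> (nat \<Rightarrow> 'h \<Rightarrow> ('h \<times> 'p) multiset \<Rightarrow> 'h)
     \<Rightarrow> ('h \<Rightarrow> (nat \<Rightarrow> nat) \<Rightarrow> 'o) \<Rightarrow> ('x, 'e, 'o) model" where
  "pint_pos L K init upd \<Phi> in0 comb out G u t' =
     out (pint_layer init upd \<Phi> in0 comb K G u t') (pos_feat L G u t')"

definition pint_pos_injective :: "('h \<Rightarrow> 'h \<Rightarrow> 'p \<Rightarrow> 'h) \<Rightarrow> ('e \<Rightarrow> real \<Rightarrow> 'p)
     \<Rightarrow> ('h \<Rightarrow> 'x \<Rightarrow> 'h) \<Rightarrow> (nat \<Rightarrow> 'h \<Rightarrow> ('h \<times> 'p) multiset \<Rightarrow> 'h)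
     \<Rightarrow> ('h \<Rightarrow> (nat \<Rightarrow> nat) \<Rightarrow> 'o) \<Rightarrow> bool" where
  "pint_pos_injective upd \<Phi> in0 comb out \<longleftrightarrow>
     inj (\<lambda>(a, b, c). upd a b c) \<and> inj (\<lambda>(a, s). \<Phi> a s) \<and> inj (\<lambda>(h, x). in0 h x)
     \<and> (\<forall>k. inj (\<lambda>(h, M). comb k h M)) \<and> inj (\<lambda>(h, z). out h z)"

end

theory Submission
  imports Defs
begin

definition loops :: "('x, 'e) tgraph \<Rightarrow> bool" where
  "loops G \<longleftrightarrow> (\<forall>e \<in> set (evs G). ev_src e = ev_dst e)"

lemma walk_const:
  assumes "loops G" "(es, ws) \<in> temporal_walks G t' L u j"
  shows "\<forall>i \<le> L. ws ! i = u"
proof (intro allI impI)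
  fix i assume "i \<le> L"
  then show "ws ! i = u"
  proof (induction i)
    case 0 then show ?case using assms(2) by (simp add: temporal_walks_def)
  next
    case (Suc i)
    then have k: "i < L" by simp
    have "es ! i < length (evs G)" "ev_connects (evs G ! (es ! i)) (ws ! i) (ws ! Suc i)"
      using assms(2) k by (auto simp: temporal_walks_def)
    moreover have "ev_src (evs G ! (es ! i)) = ev_dst (evs G ! (es ! i))"
      using assms(1) calculation(1) by (auto simp: loops_def)
    ultimately show ?case using Suc by (auto simp: ev_connects_def)
  qed
qed

lemma walk_end:
  assumes "loops G" "(es, ws) \<in> temporal_walks G t' L u j"
  shows "j = u"
  using walk_const[OF assms] assms(2) by (auto simp: temporal_walks_def)

lemma walk_touch:
  assumes "(es, ws) \<in> temporal_walks G t' L u j" "L \<ge> 1"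
  shows "\<exists>e \<in> set (evs G). ev_src e = u \<or> ev_dst e = u"
proof -
  have "es ! 0 < length (evs G)" "ev_connects (evs G ! (es ! 0)) (ws ! 0) (ws ! Suc 0)" "ws ! 0 = u"
    using assms unfolding temporal_walks_def by (auto dest!: spec[of _ 0])
  then show ?thesis by (auto simp: ev_connects_def intro!: bexI[of _ "evs G ! (es ! 0)"])
qed

lemma pos_zero_diff:
  assumes "loops G" "j \<noteq> u"
  shows "pos_feat L G u t' j = 0"
proof -
  have "temporal_walks G t' L u j = {}" using walk_end[OF assms(1)] assms(2) by auto
  then show ?thesis by (simp add: pos_feat_def)
qed

lemma pos_zero_untouched:
  assumes "\<forall>e \<in> set (evs G). ev_src e \<noteq> u \<and> ev_dst e \<noteq> u" "L \<ge> 1"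
  shows "pos_feat L G u t' j = 0"
proof -
  have "temporal_walks G t' L u j = {}" using walk_touch assms by fastforce
  then show ?thesis by (simp add: pos_feat_def)
qed

lemma pos_pos:
  assumes "loops G" "i < length (evs G)" "ev_src (evs G ! i) = u" "ev_dst (evs G ! i) = u"
    "ev_time (evs G ! i) \<le> t'" "u < nn G"
  shows "pos_feat L G u t' u > 0"
proof -
  let ?S = "temporal_walks G t' L u u"
  have mem: "(replicate L i, replicate (Suc L) u) \<in> ?S"
    using assms(2-5) by (auto simp: temporal_walks_def ev_connects_def nth_Cons')
  have "?S \<subseteq> {es. set es \<subseteq> {..<length (evs G)} \<and> length es = L}
              \<times> {ws. set ws \<subseteq> {u} \<and> length ws = Suc L}"
  proof
    fix x assume x: "x \<in> ?S"
    obtain es ws where xe: "x = (es, ws)" by (cases x)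
    have c: "\<forall>i \<le> L. ws ! i = u" using walk_const[OF assms(1)] x xe by blast
    have "set es \<subseteq> {..<length (evs G)}" using x xe
      by (auto simp: temporal_walks_def in_set_conv_nth)
    moreover have "set ws \<subseteq> {u}" using x xe c
      by (auto simp: temporal_walks_def in_set_conv_nth)
    ultimately show "x \<in> {es. set es \<subseteq> {..<length (evs G)} \<and> length es = L}
              \<times> {ws. set ws \<subseteq> {u} \<and> length ws = Suc L}" using x xe
      by (auto simp: temporal_walks_def)
  qed
  moreover have "finite ({es. set es \<subseteq> {..<length (evs G)} \<and> length es = L}
              \<times> {ws. set ws \<subseteq> {u} \<and> length ws = Suc L})"
    by (intro finite_cartesian_product finite_lists_length_eq) auto
  ultimately have "finite ?S" by (rule finite_subset)
  then have "card ?S > 0" using mem by (auto simp: card_gt_0_iff)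
  then show ?thesis using assms(6) by (simp add: pos_feat_def)
qed

lemma out_eq:
  assumes "pint_pos_injective upd \<Phi> in0 comb out"
    "pint_pos L K init upd \<Phi> in0 comb out G u t' = pint_pos L K init upd \<Phi> in0 comb out G' u' t'"
  shows "pos_feat L G u t' = pos_feat L G' u' t'"
proof -
  have "inj (\<lambda>(h, z). out h z)" using assms(1) by (simp add: pint_pos_injective_def)
  then show ?thesis using assms(2) unfolding pint_pos_def
    by (auto dest: injD[where x="(_, _)" and y="(_, _)"])
qed

theorem proposition4:
  shows "(\<exists>(G1 :: ('x, 'e) tgraph) G2 t.
            wf_tg G1 t \<and> wf_tg G2 t \<and> tg_iso G1 G2 \<and>
            (\<forall>L K (init :: 'h) upd (\<Phi> :: 'e \<Rightarrow> real \<Rightarrow> 'p) in0 comb (out :: 'h \<Rightarrow> (nat \<Rightarrow> nat) \<Rightarrow> 'o).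
               L \<ge> 1 \<and> pint_pos_injective upd \<Phi> in0 comb out \<longrightarrow>
               distinguishes_graphs (pint_pos L K init upd \<Phi> in0 comb out) G1 G2 t))
       \<and> (\<exists>(G :: ('x, 'e) tgraph) t a u1 v1 u2 v2.
            wf_tg G t \<and> u1 < nn G \<and> v1 < nn G \<and> u2 < nn G \<and> v2 < nn G \<and>
            inherently_indist G t a (u1, v1) (u2, v2) \<and>
            (\<forall>L K (init :: 'h) upd (\<Phi> :: 'e \<Rightarrow> real \<Rightarrow> 'p) in0 comb (out :: 'h \<Rightarrow> (nat \<Rightarrow> nat) \<Rightarrow> 'o).
               L \<ge> 1 \<and> pint_pos_injective upd \<Phi> in0 comb out \<longrightarrow>
               distinguishes_pairs (pint_pos L K init upd \<Phi> in0 comb out) G t (u1, v1) (u2, v2)))"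
proof (intro conjI)
  define a :: 'e where "a = undefined"
  define na :: "nat \<Rightarrow> real \<Rightarrow> 'x" where "na = (\<lambda>_ _. undefined)"
  define G1 :: "('x, 'e) tgraph" where "G1 = \<lparr>nn = 2, nattr = na, evs = [(0, 0, 0, a)]\<rparr>"
  define G2 :: "('x, 'e) tgraph" where "G2 = \<lparr>nn = 2, nattr = na, evs = [(1, 1, 0, a)]\<rparr>"
  define \<pi> :: "nat \<Rightarrow> nat" where "\<pi> = (\<lambda>x. 1 - x)"
  have bij: "bij_betw \<pi> {..<2} {..<2}"
    unfolding \<pi>_def by (rule bij_betw_byWitness[where f'="\<lambda>x. 1 - x"]) auto
  have bij2: "bij_betw ((-) (Suc 0)) {..<2} {..<2}"
    by (rule bij_betw_byWitness[where f'="(-) (Suc 0)"]) auto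
  have w1: "wf_tg G1 0" "wf_tg G2 0"
    by (auto simp: wf_tg_def G1_def G2_def ev_time_def ev_src_def ev_dst_def)
  have iso: "tg_iso G1 G2"
    unfolding tg_iso_def
  proof (rule exI[of _ \<pi>], intro conjI)
    show "bij_betw \<pi> {..<nn G1} {..<nn G2}" using bij by (simp add: G1_def G2_def)
    show "\<forall>u<nn G1. \<forall>\<tau>. nattr G1 u \<tau> = nattr G2 (\<pi> u) \<tau>" by (simp add: G1_def G2_def na_def)
    show "mset (map (map_event \<pi>) (evs G1)) = mset (evs G2)"
      by (simp add: G1_def G2_def map_event_def \<pi>_def ev_time_def ev_src_def ev_dst_def ev_attr_def)
  qed
  have l1: "loops G1" "loops G2" by (auto simp: loops_def G1_def G2_def ev_src_def ev_dst_def)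
  have dist: "distinguishes_graphs (pint_pos L K init upd \<Phi> in0 comb out) G1 G2 0"
    if L1: "L \<ge> 1" and inj: "pint_pos_injective upd \<Phi> in0 comb out"
    for L K and init :: 'h and upd and \<Phi> :: "'e \<Rightarrow> real \<Rightarrow> 'p" and in0 comb
      and out :: "'h \<Rightarrow> (nat \<Rightarrow> nat) \<Rightarrow> 'o"
  proof -
    {
      fix \<sigma> assume b: "bij_betw \<sigma> {..<nn G1} {..<nn G2}"
        and eq: "\<forall>u < nn G1. \<forall>t' \<le> 0. pint_pos L K init upd \<Phi> in0 comb out G1 u t'
                 = pint_pos L K init upd \<Phi> in0 comb out G2 (\<sigma> u) t'"
      have n0: "0 < nn G1" by (simp add: G1_def)
      have "pos_feat L G1 0 0 = pos_feat L G2 (\<sigma> 0) 0"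
        by (rule out_eq[OF inj eq[rule_format, OF n0 order_refl]])
      then have e: "pos_feat L G1 0 0 0 = pos_feat L G2 (\<sigma> 0) 0 0" by simp
      have p: "pos_feat L G1 0 0 0 > 0"
        by (rule pos_pos[OF l1(1), of 0]) (auto simp: G1_def ev_src_def ev_dst_def ev_time_def)
      have "\<sigma> 0 \<in> {..<nn G2}" using b n0 by (auto dest: bij_betwE)
      then have "\<sigma> 0 < 2" by (simp add: G2_def)
      then have "\<sigma> 0 = 0 \<or> \<sigma> 0 = 1" by auto
      moreover have "pos_feat L G2 0 0 0 = 0"
        by (rule pos_zero_untouched[OF _ L1]) (auto simp: G2_def ev_src_def ev_dst_def)
      moreover have "pos_feat L G2 1 0 0 = 0"
        by (rule pos_zero_diff[OF l1(2)]) auto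
      ultimately have False using e p by auto
    }
    then show ?thesis unfolding distinguishes_graphs_def by blast
  qed
  show "\<exists>(G1 :: ('x, 'e) tgraph) G2 t.
            wf_tg G1 t \<and> wf_tg G2 t \<and> tg_iso G1 G2 \<and>
            (\<forall>L K (init :: 'h) upd (\<Phi> :: 'e \<Rightarrow> real \<Rightarrow> 'p) in0 comb (out :: 'h \<Rightarrow> (nat \<Rightarrow> nat) \<Rightarrow> 'o).
               L \<ge> 1 \<and> pint_pos_injective upd \<Phi> in0 comb out \<longrightarrow>
               distinguishes_graphs (pint_pos L K init upd \<Phi> in0 comb out) G1 G2 t)"
    apply (rule exI[of _ G1], rule exI[of _ G2], rule exI[of _ 0])
    using w1 iso dist by simp
next
  define a :: 'e where "a = undefined"
  define na :: "nat \<Rightarrow> real \<Rightarrow> 'x" where "na = (\<lambda>_ _. undefined)"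
  define G :: "('x, 'e) tgraph" where "G = \<lparr>nn = 2, nattr = na, evs = [(0, 0, 0, a), (1, 1, 0, a)]\<rparr>"
  define \<pi> :: "nat \<Rightarrow> nat" where "\<pi> = (\<lambda>x. 1 - x)"
  have bij: "bij_betw \<pi> {..<2} {..<2}"
    unfolding \<pi>_def by (rule bij_betw_byWitness[where f'="\<lambda>x. 1 - x"]) auto
  have bij2: "bij_betw ((-) (Suc 0)) {..<2} {..<2}"
    by (rule bij_betw_byWitness[where f'="(-) (Suc 0)"]) auto
  have w: "wf_tg G 0"
    by (auto simp: wf_tg_def G_def ev_time_def ev_src_def ev_dst_def)
  have iso: "inherently_indist G 0 a (0, 0) (1, 1)"
    unfolding inherently_indist_def tg_iso_def
  proof (rule exI[of _ \<pi>], intro conjI)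
    show "bij_betw \<pi> {..<nn (add_event G (fst (0, 0)) (snd (0, 0)) 0 a)} {..<nn (add_event G (fst (1, 1)) (snd (1, 1)) 0 a)}"
      using bij by (simp add: G_def add_event_def)
    show "\<forall>u<nn (add_event G (fst (0, 0)) (snd (0, 0)) 0 a). \<forall>\<tau>. nattr (add_event G (fst (0, 0)) (snd (0, 0)) 0 a) u \<tau> = nattr (add_event G (fst (1, 1)) (snd (1, 1)) 0 a) (\<pi> u) \<tau>"
      by (simp add: G_def na_def add_event_def)
    have m: "map (map_event \<pi>) [(0, 0, 0, a), (1, 1, 0, a), (0, 0, 0, a)] = [(1, 1, 0, a), (0, 0, 0, a), (1, 1, 0, a)]"
      by (simp add: map_event_def \<pi>_def ev_time_def ev_src_def ev_dst_def ev_attr_def)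
    have "mset [(1::nat, 1::nat, 0::real, a), (0, 0, 0, a), (1, 1, 0, a)] = mset [(0, 0, 0, a), (1, 1, 0, a), (1, 1, 0, a)]"
      by simp
    then show "mset (map (map_event \<pi>) (evs (add_event G (fst (0, 0)) (snd (0, 0)) 0 a))) = mset (evs (add_event G (fst (1, 1)) (snd (1, 1)) 0 a))"
      using m by (simp add: G_def add_event_def)
  qed
  have l: "loops G" by (auto simp: loops_def G_def ev_src_def ev_dst_def)
  have dist: "distinguishes_pairs (pint_pos L K init upd \<Phi> in0 comb out) G 0 (0, 0) (1, 1)"
    if L1: "L \<ge> 1" and inj: "pint_pos_injective upd \<Phi> in0 comb out"
    for L K and init :: 'h and upd and \<Phi> :: "'e \<Rightarrow> real \<Rightarrow> 'p" and in0 comb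
      and out :: "'h \<Rightarrow> (nat \<Rightarrow> nat) \<Rightarrow> 'o"
  proof -
    {
      assume eq: "pint_pos L K init upd \<Phi> in0 comb out G 0 0
                 = pint_pos L K init upd \<Phi> in0 comb out G 1 0"
      have "pos_feat L G 0 0 = pos_feat L G 1 0"
        using out_eq[OF inj eq] .
      then have e: "pos_feat L G 0 0 1 = pos_feat L G 1 0 1" by simp
      have p: "pos_feat L G 1 0 1 > 0"
        by (rule pos_pos[OF l, of 1]) (auto simp: G_def ev_src_def ev_dst_def ev_time_def)
      have "pos_feat L G 0 0 1 = 0"
        by (rule pos_zero_diff[OF l]) auto
      then have False using e p by auto
    }
    then show ?thesis unfolding distinguishes_pairs_def by auto
  qed
  show "\<exists>(G :: ('x, 'e) tgraph) t a u1 v1 u2 v2.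
            wf_tg G t \<and> u1 < nn G \<and> v1 < nn G \<and> u2 < nn G \<and> v2 < nn G \<and>
            inherently_indist G t a (u1, v1) (u2, v2) \<and>
            (\<forall>L K (init :: 'h) upd (\<Phi> :: 'e \<Rightarrow> real \<Rightarrow> 'p) in0 comb (out :: 'h \<Rightarrow> (nat \<Rightarrow> nat) \<Rightarrow> 'o).
               L \<ge> 1 \<and> pint_pos_injective upd \<Phi> in0 comb out \<longrightarrow>
               distinguishes_pairs (pint_pos L K init upd \<Phi> in0 comb out) G t (u1, v1) (u2, v2))"
    apply (rule exI[of _ G], rule exI[of _ 0], rule exI[of _ a])
    apply (rule exI[of _ 0], rule exI[of _ 0], rule exI[of _ 1], rule exI[of _ 1])
    using w iso dist by (auto simp: G_def)
qed

end
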